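(* The map $F:\mathcal F_D\to[\mathcal F_C\to\mathcal F_R]$ is an isomorphism with inverse $G$, and $H:\mathcal F_C\to\mathcal F_D\times\mathcal F_C$ is an isomorphism with inverse $K$, where, for $d\in\mathcal F_D$, $k\in\mathcal F_C$ and $f\in[\mathcal F_C\to\mathcal F_R]$: - $F\,d\,k=d\cdot k$; - $G\,f=\uparrow_D\{\bigwedge_{i\in I}\kappa_i\to\rho_i\mid \forall i\in I:\ \rho_i\in f(\uparrow_C\kappa_i)\}$; - $H\,k=\langle\{\delta\mid\exists\kappa.\ \delta\times\kappa\in k\},\{\kappa\mid\exists\delta.\ \delta\times\kappa\in k\}\rangle$; - $K\langle d,k\rangle=d::k$.
   Context: Let $R$ be an $\omega$-algebraic lattice, with compact elements $\mathcal K(R)$, bottom $\bot$ and join $\sqcup$. Type languages: - $\Lambda_R$: $\rho::=\psi_a\mid\omega\mid\rho\wedge\rho$, with one constant $\psi_a$ for each $a\in\mathcal K(R)$. - $\Lambda_D$: $\delta::=\rho\mid\kappa\to\rho\mid\omega\mid\delta\wedge\delta$, with $\rho\in\Lambda_R$. - $\Lambda_C$: $\kappa::=\delta\times\kappa\mid\omega\mid\kappa\wedge\kappa$. An intersection type theory is a reflexive, transitive relation $\le$ satisfying $\sigma\wedge\tau\le\sigma$, $\sigma\wedge\tau\le\tau$, $\sigma\le\omega$, and, if $\rho\le\sigma$ and $\rho\le\tau$, then $\rho\le\sigma\wedge\tau$. We write $\sigma\sim\tau$ when $\sigma\le\tau\le\sigma$. The relations are defined as follows: - $\le_R$ is the least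 intersection type theory on $\Lambda_R$ with $\psi_\bot\sim_R\omega$ and $\psi_{a\sqcup b}\sim_R\psi_a\wedge\psi_b$. - $\le_D$ and $\le_C$ are the least intersection type theories on $\Lambda_D$ and $\Lambda_C$ closed under the following: - if $\rho_1\le_R\rho_2$ then $\rho_1\le_D\rho_2$; - $\omega\le_D\omega\to\omega$; - $\psi_a\le_D\omega\to\psi_a$ and $\omega\to\psi_a\le_D\psi_a$; - $\omega\le_C\omega\times\omega$; - $(\kappa\to\rho_1)\wedge(\kappa\to\rho_2)\le_D\kappa\to(\rho_1\wedge\rho_2)$; - $(\delta_1\times\kappa_1)\wedge(\delta_2\times\kappa_2)\le_C(\delta_1\wedge\delta_2)\times(\kappa_1\wedge\kappa_2)$; - if $\kappa_2\le_C\kappa_1$ and $\rho_1\le_R\rho_2$ then $\kappa_1\to\rho_1\le_D\kappa_2\to\rho_2$; - if $\delta_1\le_D\delta_2$ and $\kappa_1\le_C\kappa_2$ then $\delta_1\times\kappa_1\le_C\delta_2\times\kappa_2$. A filter over $(\Lambda_A,\le_A)$ is a set containing $\omega$, upward closed under $\le_A$, and closed under $\wedge$. $\mathcal F_A$ is the set of filters, ordered by $\subseteq$. For a set $S$ of types, $\uparrow_A S$ is its upward closure, and $\uparrow_A\sigma=\{\tau\mid\sigma\le_A\tau\}$. $[\mathcal F_C\to\mathcal F_R]$ is the set of Scott-continuous functions, ordered pointwise, and $\mathcal F_D\times\mathcal F_C$ is ordered componentwise. The two operations are: - $d\cdot k=\uparrow_R\{\rho\in\Lambda_R\mid \exists\,\kappa\to\rho\in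 d \text{ with }\kappa\in k\}$; - $d::k=\uparrow_C\{\bigwedge_{i\in I}\delta_i\times\kappa_i\mid\forall i\in I:\ \delta_i\in d,\ \kappa_i\in k\}$. In both, $I$ ranges over finite sets, and the empty intersection is $\omega$. *)

theory Defs
  imports Main "HOL-Library.Countable_Set"
begin

definition directed_set :: "'a::order set \<Rightarrow> bool" where
  "directed_set D \<longleftrightarrow> D \<noteq> {} \<and> (\<forall>x\<in>D. \<forall>y\<in>D. \<exists>z\<in>D. x \<le> z \<and> y \<le> z)"

definition compact_el :: "'a::complete_lattice \<Rightarrow> bool" where
  "compact_el a \<longleftrightarrow> (\<forall>D. directed_set D \<and> a \<le> Sup D \<longrightarrow> (\<exists>x\<in>D. a \<le> x))"

definition omega_algebraic :: "'a::complete_lattice itself \<Rightarrow> bool" where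
  "omega_algebraic _ \<longleftrightarrow>
     (\<forall>x::'a. x = Sup {c. compact_el c \<and> c \<le> x}) \<and> countable {c::'a. compact_el c}"

text \<open>One raw syntax for all three languages; omega and intersection are shared,
  so that Lambda_R is literally a subset of Lambda_D.\<close>
datatype 'a ty = Psi 'a | Om | And "'a ty" "'a ty" | Arr "'a ty" "'a ty" | Prod "'a ty" "'a ty"

fun isR :: "'a::complete_lattice ty \<Rightarrow> bool" where
  "isR (Psi a) = compact_el a"
| "isR Om = True"
| "isR (And s t) = (isR s \<and> isR t)"
| "isR (Arr _ _) = False"
| "isR (Prod _ _) = False"

fun isD :: "'a::complete_lattice ty \<Rightarrow> bool" and isC :: "'a::complete_lattice ty \<Rightarrow> bool" where
  "isD (Psi a) = compact_el a"
| "isD Om = True"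
| "isD (And s t) = (isD s \<and> isD t)"
| "isD (Arr k r) = (isC k \<and> isR r)"
| "isD (Prod _ _) = False"
| "isC (Psi _) = False"
| "isC Om = True"
| "isC (And s t) = (isC s \<and> isC t)"
| "isC (Arr _ _) = False"
| "isC (Prod d k) = (isD d \<and> isC k)"

inductive leR :: "'a::complete_lattice ty \<Rightarrow> 'a ty \<Rightarrow> bool" where
  reflR: "isR s \<Longrightarrow> leR s s"
| transR: "leR s t \<Longrightarrow> leR t u \<Longrightarrow> leR s u"
| andR1: "isR s \<Longrightarrow> isR t \<Longrightarrow> leR (And s t) s"
| andR2: "isR s \<Longrightarrow> isR t \<Longrightarrow> leR (And s t) t"
| omR: "isR s \<Longrightarrow> leR s Om"
| glbR: "leR r s \<Longrightarrow> leR r t \<Longrightarrow> leR r (And s t)"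
| botR1: "leR (Psi bot) Om"
| botR2: "leR Om (Psi bot)"
| joinR1: "compact_el a \<Longrightarrow> compact_el b \<Longrightarrow> leR (Psi (sup a b)) (And (Psi a) (Psi b))"
| joinR2: "compact_el a \<Longrightarrow> compact_el b \<Longrightarrow> leR (And (Psi a) (Psi b)) (Psi (sup a b))"

inductive leD :: "'a::complete_lattice ty \<Rightarrow> 'a ty \<Rightarrow> bool"
  and leC :: "'a::complete_lattice ty \<Rightarrow> 'a ty \<Rightarrow> bool" where
  reflD: "isD s \<Longrightarrow> leD s s"
| transD: "leD s t \<Longrightarrow> leD t u \<Longrightarrow> leD s u"
| andD1: "isD s \<Longrightarrow> isD t \<Longrightarrow> leD (And s t) s"
| andD2: "isD s \<Longrightarrow> isD t \<Longrightarrow> leD (And s t) t"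
| omD: "isD s \<Longrightarrow> leD s Om"
| glbD: "leD r s \<Longrightarrow> leD r t \<Longrightarrow> leD r (And s t)"
| fromR: "leR r1 r2 \<Longrightarrow> leD r1 r2"
| omArr: "leD Om (Arr Om Om)"
| psiArr1: "compact_el a \<Longrightarrow> leD (Psi a) (Arr Om (Psi a))"
| psiArr2: "compact_el a \<Longrightarrow> leD (Arr Om (Psi a)) (Psi a)"
| arrAnd: "isC k \<Longrightarrow> isR r1 \<Longrightarrow> isR r2 \<Longrightarrow> leD (And (Arr k r1) (Arr k r2)) (Arr k (And r1 r2))"
| arrMono: "leC k2 k1 \<Longrightarrow> leR r1 r2 \<Longrightarrow> leD (Arr k1 r1) (Arr k2 r2)"
| reflC: "isC s \<Longrightarrow> leC s s"
| transC: "leC s t \<Longrightarrow> leC t u \<Longrightarrow> leC s u"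
| andC1: "isC s \<Longrightarrow> isC t \<Longrightarrow> leC (And s t) s"
| andC2: "isC s \<Longrightarrow> isC t \<Longrightarrow> leC (And s t) t"
| omC: "isC s \<Longrightarrow> leC s Om"
| glbC: "leC r s \<Longrightarrow> leC r t \<Longrightarrow> leC r (And s t)"
| omProd: "leC Om (Prod Om Om)"
| prodAnd: "isD d1 \<Longrightarrow> isD d2 \<Longrightarrow> isC k1 \<Longrightarrow> isC k2 \<Longrightarrow>
     leC (And (Prod d1 k1) (Prod d2 k2)) (Prod (And d1 d2) (And k1 k2))"
| prodMono: "leD d1 d2 \<Longrightarrow> leC k1 k2 \<Longrightarrow> leC (Prod d1 k1) (Prod d2 k2)"

fun bigAnd :: "'a ty list \<Rightarrow> 'a ty" where
  "bigAnd [] = Om"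
| "bigAnd [t] = t"
| "bigAnd (t # ts) = And t (bigAnd ts)"

definition is_filter :: "('a ty \<Rightarrow> bool) \<Rightarrow> ('a ty \<Rightarrow> 'a ty \<Rightarrow> bool) \<Rightarrow> 'a ty set \<Rightarrow> bool" where
  "is_filter L le S \<longleftrightarrow> S \<subseteq> {t. L t} \<and> Om \<in> S \<and> (\<forall>s\<in>S. \<forall>t. le s t \<longrightarrow> t \<in> S)
     \<and> (\<forall>s\<in>S. \<forall>t\<in>S. And s t \<in> S)"

definition upc :: "('a ty \<Rightarrow> 'a ty \<Rightarrow> bool) \<Rightarrow> 'a ty set \<Rightarrow> 'a ty set" where
  "upc le S = {t. \<exists>s\<in>S. le s t}"

definition FR :: "'a::complete_lattice ty set set" where "FR = {S. is_filter isR leR S}"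
definition FD :: "'a::complete_lattice ty set set" where "FD = {S. is_filter isD leD S}"
definition FC :: "'a::complete_lattice ty set set" where "FC = {S. is_filter isC leC S}"

text \<open>Scott-continuous maps F_C -> F_R (values outside F_C are irrelevant).
  Directed sups of filters are unions.\<close>
definition scott_cont :: "('a::complete_lattice ty set \<Rightarrow> 'a ty set) \<Rightarrow> bool" where
  "scott_cont f \<longleftrightarrow> (\<forall>k\<in>FC. f k \<in> FR)
     \<and> (\<forall>k\<in>FC. \<forall>k'\<in>FC. k \<subseteq> k' \<longrightarrow> f k \<subseteq> f k')
     \<and> (\<forall>Ds. Ds \<subseteq> FC \<and> directed_set Ds \<longrightarrow> f (\<Union>Ds) = \<Union>(f ` Ds))"

definition app :: "'a::complete_lattice ty set \<Rightarrow> 'a ty set \<Rightarrow> 'a ty set" where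
  "app d k = upc leR {r. isR r \<and> (\<exists>\<kappa>. Arr \<kappa> r \<in> d \<and> \<kappa> \<in> k)}"

definition cons :: "'a::complete_lattice ty set \<Rightarrow> 'a ty set \<Rightarrow> 'a ty set" where
  "cons d k = upc leC {bigAnd (map (\<lambda>(\<delta>, \<kappa>). Prod \<delta> \<kappa>) ps) | ps.
                         \<forall>(\<delta>, \<kappa>)\<in>set ps. \<delta> \<in> d \<and> \<kappa> \<in> k}"

definition Fmap :: "'a::complete_lattice ty set \<Rightarrow> 'a ty set \<Rightarrow> 'a ty set" where
  "Fmap d = (\<lambda>k. app d k)"

definition Gmap :: "('a::complete_lattice ty set \<Rightarrow> 'a ty set) \<Rightarrow> 'a ty set" where
  "Gmap f = upc leD {bigAnd (map (\<lambda>(\<kappa>, r). Arr \<kappa> r) ps) | ps.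
                        \<forall>(\<kappa>, r)\<in>set ps. isC \<kappa> \<and> isR r \<and> r \<in> f (upc leC {\<kappa>})}"

definition Hmap :: "'a::complete_lattice ty set \<Rightarrow> 'a ty set \<times> 'a ty set" where
  "Hmap k = ({\<delta>. \<exists>\<kappa>. Prod \<delta> \<kappa> \<in> k}, {\<kappa>. \<exists>\<delta>. Prod \<delta> \<kappa> \<in> k})"

definition Kmap :: "'a::complete_lattice ty set \<times> 'a ty set \<Rightarrow> 'a ty set" where
  "Kmap p = cons (fst p) (snd p)"

end

theory Submission
  imports Defs
begin


lemma compact_sup: "compact_el a \<Longrightarrow> compact_el b \<Longrightarrow> compact_el (sup a b)"
  unfolding compact_el_def
proof (intro allI impI)
  fix D assume a: "\<forall>D. directed_set D \<and> a \<le> Sup D \<longrightarrow> (\<exists>x\<in>D. a \<le> x)"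
    and b: "\<forall>D. directed_set D \<and> b \<le> Sup D \<longrightarrow> (\<exists>x\<in>D. b \<le> x)"
    and D: "directed_set D \<and> sup a b \<le> Sup D"
  then obtain x where x: "x \<in> D" "a \<le> x" by auto
  from a b D obtain y where y: "y \<in> D" "b \<le> y" by auto
  from D x y obtain z where "z \<in> D" "x \<le> z" "y \<le> z" unfolding directed_set_def by blast
  then show "\<exists>x\<in>D. sup a b \<le> x" using x y by (meson le_sup_iff order_trans)
qed

lemma compact_bot: "compact_el (bot::'a::complete_lattice)"
  unfolding compact_el_def directed_set_def by auto

lemma leR_dom: "leR s t \<Longrightarrow> isR s \<and> isR t"
  by (induct rule: leR.induct) (auto simp: compact_sup compact_bot)

lemma isR_isD: "isR t \<Longrightarrow> isD t"
  by (induct t) auto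

lemma leDC_dom: "leD s t \<Longrightarrow> isD s \<and> isD t" "leC s t \<Longrightarrow> isC s \<and> isC t"
  by (induct rule: leD_leC.inducts) (auto simp: isR_isD dest: leR_dom)

locale itt =
  fixes L :: "'a ty \<Rightarrow> bool" and le :: "'a ty \<Rightarrow> 'a ty \<Rightarrow> bool"
  assumes refl: "L s \<Longrightarrow> le s s"
    and trans: "le s t \<Longrightarrow> le t u \<Longrightarrow> le s u"
    and and1: "L s \<Longrightarrow> L t \<Longrightarrow> le (And s t) s"
    and and2: "L s \<Longrightarrow> L t \<Longrightarrow> le (And s t) t"
    and om: "L s \<Longrightarrow> le s Om"
    and glb: "le r s \<Longrightarrow> le r t \<Longrightarrow> le r (And s t)"
    and dom: "le s t \<Longrightarrow> L s \<and> L t"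
    and LOm: "L Om"
    and LAnd: "L (And s t) \<longleftrightarrow> L s \<and> L t"
begin

lemma L_bigAnd: "\<forall>x\<in>set xs. L x \<Longrightarrow> L (bigAnd xs)"
  by (induct xs rule: bigAnd.induct) (auto simp: LOm LAnd)

lemma bigAnd_mem: "\<forall>x\<in>set xs. L x \<Longrightarrow> x \<in> set xs \<Longrightarrow> le (bigAnd xs) x"
proof (induct xs rule: bigAnd.induct)
  case (3 t u ts)
  show ?case
  proof (cases "x = t")
    case True
    have "L (bigAnd (u#ts))" using 3 by (intro L_bigAnd) auto
    then show ?thesis using 3 True by (auto intro: and1)
  next
    case False
    have L: "L (bigAnd (u#ts))" "L t" using 3 by (intro L_bigAnd, auto)
    have "le (bigAnd (u#ts)) x" using 3 False by auto
    moreover have "le (And t (bigAnd (u#ts))) (bigAnd (u#ts))" using L by (intro and2)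
    ultimately show ?thesis by (simp del: bigAnd.simps(2)) (rule trans)
  qed
qed (auto intro: refl)

lemma bigAnd_glb: "L s \<Longrightarrow> \<forall>x\<in>set xs. le s x \<Longrightarrow> le s (bigAnd xs)"
proof (induct xs rule: bigAnd.induct)
  case 1 then show ?case by (simp add: om)
next
  case (2 t) then show ?case by simp
next
  case (3 t u ts) then show ?case by (simp del: bigAnd.simps(2)) (rule glb, auto)
qed

lemma bigAnd_subset: "\<forall>x\<in>set ys. L x \<Longrightarrow> set xs \<subseteq> set ys \<Longrightarrow> le (bigAnd ys) (bigAnd xs)"
  by (rule bigAnd_glb) (auto intro: L_bigAnd bigAnd_mem)

lemma And_mono: "le a b \<Longrightarrow> le c d \<Longrightarrow> le (And a c) (And b d)"
  by (metis and1 and2 dom glb trans)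

lemma bigAnd_append: "\<forall>x\<in>set (xs@ys). L x \<Longrightarrow> le (bigAnd (xs@ys)) (And (bigAnd xs) (bigAnd ys))"
  by (intro glb bigAnd_subset) auto



definition der :: "'a ty set \<Rightarrow> 'a ty \<Rightarrow> bool" where
  "der X t \<longleftrightarrow> (\<exists>xs. set xs \<subseteq> X \<and> le (bigAnd xs) t)"

lemma der_Om: "der X Om"
  unfolding der_def by (rule exI[of _ "[]"]) (auto intro: refl LOm)

lemma der_mem: "L t \<Longrightarrow> t \<in> X \<Longrightarrow> der X t"
  unfolding der_def by (rule exI[of _ "[t]"]) (auto intro: refl)

lemma der_mono: "der X t \<Longrightarrow> X \<subseteq> Y \<Longrightarrow> der Y t"
  unfolding der_def by blast

lemma der_list: "X \<subseteq> Collect L \<Longrightarrow> \<forall>y\<in>set ys. der X y \<Longrightarrow>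
   \<exists>xs. set xs \<subseteq> X \<and> (\<forall>y\<in>set ys. le (bigAnd xs) y)"
proof (induct ys)
  case Nil then show ?case by (intro exI[of _ "[]"]) auto
next
  case (Cons y ys)
  then obtain xs2 where xs2: "set xs2 \<subseteq> X" "\<forall>y\<in>set ys. le (bigAnd xs2) y" by auto
  from Cons obtain xs1 where xs1: "set xs1 \<subseteq> X" "le (bigAnd xs1) y" unfolding der_def by auto
  have LL: "\<forall>x\<in>set (xs1@xs2). L x" using xs1 xs2 Cons by auto
  have "le (bigAnd (xs1@xs2)) (bigAnd xs1)" "le (bigAnd (xs1@xs2)) (bigAnd xs2)"
    using LL by (auto intro: bigAnd_subset)
  then have "\<forall>y\<in>set (y#ys). le (bigAnd (xs1@xs2)) y" using xs1 xs2 by (metis set_ConsD trans)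
  then show ?case using xs1 xs2 by (intro exI[of _ "xs1@xs2"]) auto
qed

lemma der_trans: "X \<subseteq> Collect L \<Longrightarrow> \<forall>y\<in>set ys. der X y \<Longrightarrow> le (bigAnd ys) t \<Longrightarrow> der X t"
proof -
  assume X: "X \<subseteq> Collect L" and ys: "\<forall>y\<in>set ys. der X y" and t: "le (bigAnd ys) t"
  obtain xs where xs: "set xs \<subseteq> X" "\<forall>y\<in>set ys. le (bigAnd xs) y" using der_list[OF X ys] by auto
  have "L (bigAnd xs)" using xs X by (auto intro!: L_bigAnd)
  then have "le (bigAnd xs) (bigAnd ys)" using xs by (auto intro: bigAnd_glb)
  then show ?thesis using xs t unfolding der_def by (metis trans)
qed

lemma filt_bigAnd: "is_filter L le S \<Longrightarrow> set xs \<subseteq> S \<Longrightarrow> bigAnd xs \<in> S"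
  unfolding is_filter_def by (induct xs rule: bigAnd.induct) auto

lemma filt_der: "is_filter L le S \<Longrightarrow> X \<subseteq> S \<Longrightarrow> der X t \<Longrightarrow> t \<in> S"
  unfolding der_def by (metis filt_bigAnd is_filter_def order_trans)

lemma upc_der: "upc le {bigAnd xs |xs. set xs \<subseteq> X} = {t. der X t}"
  unfolding upc_def der_def by blast

lemma der_And: "X \<subseteq> Collect L \<Longrightarrow> der X s \<Longrightarrow> der X t \<Longrightarrow> der X (And s t)"
proof -
  assume X: "X \<subseteq> Collect L" and "der X s" "der X t"
  then obtain xs ys where xy: "set xs \<subseteq> X" "set ys \<subseteq> X" "le (bigAnd xs) s" "le (bigAnd ys) t"
    unfolding der_def by blast
  have "le (bigAnd (xs@ys)) (And (bigAnd xs) (bigAnd ys))"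
    using X xy by (intro bigAnd_append) auto
  moreover have "le (And (bigAnd xs) (bigAnd ys)) (And s t)" using xy by (intro And_mono)
  ultimately have "le (bigAnd (xs@ys)) (And s t)" by (rule trans)
  then show ?thesis using xy unfolding der_def by (intro exI[of _ "xs@ys"]) simp
qed

lemma der_up: "der X s \<Longrightarrow> le s t \<Longrightarrow> der X t"
  unfolding der_def using trans by blast

lemma der_L: "der X s \<Longrightarrow> L s"
  unfolding der_def using dom by blast

lemma upc_filter: "X \<subseteq> Collect L \<Longrightarrow> is_filter L le (upc le {bigAnd xs |xs. set xs \<subseteq> X})"
  unfolding upc_der is_filter_def using der_Om der_And der_up der_L by blast

lemma principal_filter: "L t \<Longrightarrow> is_filter L le (upc le {t})"
proof -
  assume Lt: "L t"
  have u: "upc le {t} = {u. le t u}" unfolding upc_def by blast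
  show ?thesis unfolding u is_filter_def
    using dom om[OF Lt] trans glb by blast
qed

end

interpretation R: itt "isR :: 'a::complete_lattice ty \<Rightarrow> bool" leR
  apply unfold_locales
  apply (fact leR.reflR, fact leR.transR, fact leR.andR1, fact leR.andR2, fact leR.omR, fact leR.glbR,
     fact leR_dom, simp, simp)
  done

interpretation D: itt "isD :: 'a::complete_lattice ty \<Rightarrow> bool" leD
  apply unfold_locales
  apply (fact reflD, fact transD, fact andD1, fact andD2, fact omD, fact glbD,
     fact leDC_dom, simp, simp)
  done

interpretation C: itt "isC :: 'a::complete_lattice ty \<Rightarrow> bool" leC
  apply unfold_locales
  apply (fact reflC, fact transC, fact andC1, fact andC2, fact omC, fact glbC,
     fact leDC_dom, simp, simp)
  done



lemmas [trans] = leR.transR transD transC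

fun arl :: "'a ty \<Rightarrow> ('a ty \<times> 'a ty) list" where
  "arl (Psi a) = [(Om, Psi a)]"
| "arl Om = []"
| "arl (And s t) = arl s @ arl t"
| "arl (Arr k r) = [(k, r)]"
| "arl (Prod _ _) = []"

fun prl :: "'a ty \<Rightarrow> ('a ty \<times> 'a ty) list" where
  "prl (Psi a) = []"
| "prl Om = []"
| "prl (And s t) = prl s @ prl t"
| "prl (Arr k r) = []"
| "prl (Prod d k) = [(d, k)]"

lemma arl_bigAnd: "arl (bigAnd xs) = concat (map arl xs)"
  by (induct xs rule: bigAnd.induct) auto

lemma prl_bigAnd: "prl (bigAnd xs) = concat (map prl xs)"
  by (induct xs rule: bigAnd.induct) auto

lemma arl_R: "isR (r::'a::complete_lattice ty) \<Longrightarrow>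
  (\<forall>p\<in>set (arl r). fst p = Om \<and> isR (snd p) \<and> leR r (snd p)) \<and> leR (bigAnd (map snd (arl r))) r"
proof (induct r)
  case (Psi x) then show ?case by (auto intro: leR.reflR)
next
  case Om then show ?case by (auto intro: leR.reflR)
next
  case (And s t)
  then have IH: "\<forall>p\<in>set (arl s). fst p = Om \<and> isR (snd p) \<and> leR s (snd p)" "leR (bigAnd (map snd (arl s))) s"
    "\<forall>p\<in>set (arl t). fst p = Om \<and> isR (snd p) \<and> leR t (snd p)" "leR (bigAnd (map snd (arl t))) t"
    and st: "isR s" "isR t" by auto
  have "leR (bigAnd (map snd (arl s) @ map snd (arl t))) (And (bigAnd (map snd (arl s))) (bigAnd (map snd (arl t))))"
    using IH by (intro R.bigAnd_append) auto
  also have "leR \<dots> (And s t)" using IH by (intro R.And_mono)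
  finally have 1: "leR (bigAnd (map snd (arl (And s t)))) (And s t)" by simp
  have 2: "\<forall>p\<in>set (arl (And s t)). fst p = Om \<and> isR (snd p) \<and> leR (And s t) (snd p)"
    using IH st R.and1 R.and2 R.trans by fastforce
  show ?case using 1 2 by blast
qed auto

lemma arl_D: "isD (t::'a::complete_lattice ty) \<Longrightarrow>
  (\<forall>p\<in>set (arl t). isC (fst p) \<and> isR (snd p) \<and> leD t (Arr (fst p) (snd p)))
   \<and> leD (bigAnd (map (\<lambda>(k, r). Arr k r) (arl t))) t"
proof (induct t)
  case (Psi x) then show ?case by (auto intro: psiArr1 psiArr2)
next
  case Om then show ?case by (auto intro: reflD)
next
  case (Arr k r) then show ?case by (auto intro: reflD)
next
  case (And s t)
  let ?g = "\<lambda>(k, r). Arr k r"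
  from And have IH: "\<forall>p\<in>set (arl s). isC (fst p) \<and> isR (snd p) \<and> leD s (Arr (fst p) (snd p))"
    "leD (bigAnd (map ?g (arl s))) s"
    "\<forall>p\<in>set (arl t). isC (fst p) \<and> isR (snd p) \<and> leD t (Arr (fst p) (snd p))"
    "leD (bigAnd (map ?g (arl t))) t"
    and st: "isD s" "isD t" by auto
  have "leD (bigAnd (map ?g (arl s) @ map ?g (arl t))) (And (bigAnd (map ?g (arl s))) (bigAnd (map ?g (arl t))))"
    using IH by (intro D.bigAnd_append) auto
  also have "leD \<dots> (And s t)" using IH by (intro D.And_mono)
  finally have 1: "leD (bigAnd (map ?g (arl (And s t)))) (And s t)" by simp
  have 2: "\<forall>p\<in>set (arl (And s t)). isC (fst p) \<and> isR (snd p) \<and> leD (And s t) (Arr (fst p) (snd p))"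
    using IH st D.and1 D.and2 D.trans by fastforce
  show ?case using 1 2 by blast
qed auto

lemma prl_C: "isC (t::'a::complete_lattice ty) \<Longrightarrow>
  (\<forall>p\<in>set (prl t). isD (fst p) \<and> isC (snd p) \<and> leC t (Prod (fst p) (snd p)))
   \<and> leC (bigAnd (map (\<lambda>(d, k). Prod d k) (prl t))) t"
proof (induct t)
  case Om then show ?case by (auto intro: reflC)
next
  case (Prod d k) then show ?case by (auto intro: reflC)
next
  case (And s t)
  let ?g = "\<lambda>(d, k). Prod d k"
  from And have IH: "\<forall>p\<in>set (prl s). isD (fst p) \<and> isC (snd p) \<and> leC s (Prod (fst p) (snd p))"
    "leC (bigAnd (map ?g (prl s))) s"
    "\<forall>p\<in>set (prl t). isD (fst p) \<and> isC (snd p) \<and> leC t (Prod (fst p) (snd p))"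
    "leC (bigAnd (map ?g (prl t))) t"
    and st: "isC s" "isC t" by auto
  have "leC (bigAnd (map ?g (prl s) @ map ?g (prl t))) (And (bigAnd (map ?g (prl s))) (bigAnd (map ?g (prl t))))"
    using IH by (intro C.bigAnd_append) auto
  also have "leC \<dots> (And s t)" using IH by (intro C.And_mono)
  finally have 1: "leC (bigAnd (map ?g (prl (And s t)))) (And s t)" by simp
  have 2: "\<forall>p\<in>set (prl (And s t)). isD (fst p) \<and> isC (snd p) \<and> leC (And s t) (Prod (fst p) (snd p))"
    using IH st C.and1 C.and2 C.trans by fastforce
  show ?case using 1 2 by blast
qed auto



definition AX :: "'a::complete_lattice ty \<Rightarrow> 'a ty \<Rightarrow> 'a ty set" where
  "AX s k = {\<rho>. \<exists>\<kappa>'. (\<kappa>', \<rho>) \<in> set (arl s) \<and> leC k \<kappa>'}"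

lemma AX_R: "isD s \<Longrightarrow> AX s k \<subseteq> Collect isR"
  unfolding AX_def using arl_D by fastforce

lemma AX_mono: "set (arl s) \<subseteq> set (arl s') \<Longrightarrow> AX s k \<subseteq> AX s' k"
  unfolding AX_def by blast

lemma AX_self: "isD s \<Longrightarrow> p \<in> set (arl s) \<Longrightarrow> R.der (AX s (fst p)) (snd p)"
proof -
  assume "isD s" "p \<in> set (arl s)"
  then have "isC (fst p)" "isR (snd p)" using arl_D by blast+
  then show ?thesis using \<open>p \<in> set (arl s)\<close> unfolding AX_def
    by (intro R.der_mem) (auto intro: reflC intro!: exI[of _ "fst p"])
qed

lemma arr_inv: "leD s t \<Longrightarrow> \<forall>p\<in>set (arl t). R.der (AX s (fst p)) (snd p)"
  and "leC (s::'a::complete_lattice ty) t \<Longrightarrow> True"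
proof (induct rule: leD_leC.inducts)
  case (reflD s) then show ?case using AX_self by blast
next
  case (transD s t u)
  have sD: "isD s" using transD leDC_dom by blast
  show ?case
  proof
    fix p assume p: "p \<in> set (arl u)"
    with transD obtain xs where xs: "set xs \<subseteq> AX t (fst p)" "leR (bigAnd xs) (snd p)"
      unfolding R.der_def by blast
    have "\<forall>y\<in>set xs. R.der (AX s (fst p)) y"
    proof
      fix y assume "y \<in> set xs"
      then obtain k' where k': "(k', y) \<in> set (arl t)" "leC (fst p) k'" using xs unfolding AX_def by blast
      then have "R.der (AX s k') y" using transD by fastforce
      moreover have "AX s k' \<subseteq> AX s (fst p)" using k' unfolding AX_def by (blast intro: transC)
      ultimately show "R.der (AX s (fst p)) y" by (rule R.der_mono)
    qed
    then show "R.der (AX s (fst p)) (snd p)" using R.der_trans[OF AX_R[OF sD]] xs by blast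
  qed
next
  case (andD1 s t)
  then have "isD (And s t)" by simp
  then show ?case using AX_self by fastforce
next
  case (andD2 s t)
  then have "isD (And s t)" by simp
  then show ?case using AX_self by fastforce
next
  case (omD s) then show ?case by simp
next
  case (glbD r s t) then show ?case by auto
next
  case (fromR r1 r2)
  then have r: "isR r1" "isR r2" using leR_dom by blast+
  show ?case
  proof
    fix p assume p: "p \<in> set (arl r2)"
    then have p2: "fst p = Om" "leR r2 (snd p)" using arl_R[OF r(2)] by blast+
    have "set (map snd (arl r1)) \<subseteq> AX r1 (fst p)"
      using arl_R[OF r(1)] p2 unfolding AX_def by (force intro: reflC)
    moreover have "leR (bigAnd (map snd (arl r1))) (snd p)"
      using arl_R[OF r(1)] fromR(1) p2 by (blast intro: leR.transR)
    ultimately show "R.der (AX r1 (fst p)) (snd p)" unfolding R.der_def by blast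
  qed
next
  case omArr then show ?case by (simp add: R.der_Om)
next
  case (psiArr1 a)
  then show ?case unfolding AX_def by (auto intro!: R.der_mem reflC)
next
  case (psiArr2 a)
  then show ?case unfolding AX_def by (auto intro!: R.der_mem reflC)
next
  case (arrAnd k r1 r2)
  have "set [r1, r2] \<subseteq> AX (And (Arr k r1) (Arr k r2)) k" unfolding AX_def using arrAnd
    by (auto intro: reflC)
  moreover have "leR (bigAnd [r1, r2]) (And r1 r2)" using arrAnd by (auto intro: leR.reflR)
  ultimately have "R.der (AX (And (Arr k r1) (Arr k r2)) k) (And r1 r2)"
    unfolding R.der_def by blast
  then show ?case by simp
next
  case (arrMono k2 k1 r1 r2)
  have "set [r1] \<subseteq> AX (Arr k1 r1) k2" unfolding AX_def using arrMono by auto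
  moreover have "leR (bigAnd [r1]) r2" using arrMono by simp
  ultimately have "R.der (AX (Arr k1 r1) k2) r2" unfolding R.der_def by blast
  then show ?case by simp
qed auto

lemma prod_inv_aux: "leD s t \<Longrightarrow> True"
  and prod_inv: "leC (s::'a::complete_lattice ty) t \<Longrightarrow>
   \<forall>p\<in>set (prl t). D.der (fst ` set (prl s)) (fst p) \<and> C.der (snd ` set (prl s)) (snd p)"
proof (induct rule: leD_leC.inducts)
  case (reflC s) then show ?case using prl_C by (blast intro: D.der_mem C.der_mem)
next
  case (transC s t u)
  have sC: "isC s" using transC leDC_dom by blast
  have X1: "fst ` set (prl s) \<subseteq> Collect isD" and X2: "snd ` set (prl s) \<subseteq> Collect isC"
    using prl_C[OF sC] by auto
  show ?case
  proof
    fix p assume p: "p \<in> set (prl u)"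
    with transC obtain xs ys where xs: "set xs \<subseteq> fst ` set (prl t)" "leD (bigAnd xs) (fst p)"
      and ys: "set ys \<subseteq> snd ` set (prl t)" "leC (bigAnd ys) (snd p)"
      unfolding D.der_def C.der_def by blast
    have "\<forall>y\<in>set xs. D.der (fst ` set (prl s)) y" using xs transC by fastforce
    moreover have "\<forall>y\<in>set ys. C.der (snd ` set (prl s)) y" using ys transC by fastforce
    ultimately show "D.der (fst ` set (prl s)) (fst p) \<and> C.der (snd ` set (prl s)) (snd p)"
      using D.der_trans[OF X1] C.der_trans[OF X2] xs ys by blast
  qed
next
  case (andC1 s t)
  then have "isC (And s t)" by simp
  then show ?case using prl_C by (fastforce intro: D.der_mem C.der_mem)
next
  case (andC2 s t)
  then have "isC (And s t)" by simp
  then show ?case using prl_C by (fastforce intro: D.der_mem C.der_mem)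
next
  case (omC s) then show ?case by simp
next
  case (glbC r s t) then show ?case by auto
next
  case omProd then show ?case by (simp add: D.der_Om C.der_Om)
next
  case (prodAnd d1 d2 k1 k2)
  have "leD (bigAnd [d1, d2]) (And d1 d2)" using prodAnd by (auto intro: reflD)
  moreover have "leC (bigAnd [k1, k2]) (And k1 k2)" using prodAnd by (auto intro: reflC)
  moreover have "set [d1, d2] \<subseteq> fst ` set (prl (And (Prod d1 k1) (Prod d2 k2)))"
    "set [k1, k2] \<subseteq> snd ` set (prl (And (Prod d1 k1) (Prod d2 k2)))" by auto
  ultimately have "D.der (fst ` set (prl (And (Prod d1 k1) (Prod d2 k2)))) (And d1 d2)"
    "C.der (snd ` set (prl (And (Prod d1 k1) (Prod d2 k2)))) (And k1 k2)"
    unfolding D.der_def C.der_def by blast+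
  then show ?case by simp
next
  case (prodMono d1 d2 k1 k2)
  have "set [d1] \<subseteq> fst ` set (prl (Prod d1 k1))" "set [k1] \<subseteq> snd ` set (prl (Prod d1 k1))"
    "leD (bigAnd [d1]) d2" "leC (bigAnd [k1]) k2" using prodMono by auto
  then have "D.der (fst ` set (prl (Prod d1 k1))) d2" "C.der (snd ` set (prl (Prod d1 k1))) k2"
    unfolding D.der_def C.der_def by blast+
  then show ?case by simp
qed auto



lemma list_pre: "set xs \<subseteq> {g a b | a b. P a b} \<Longrightarrow>
  \<exists>ps. xs = map (\<lambda>(a, b). g a b) ps \<and> (\<forall>(a, b)\<in>set ps. P a b)"
proof (induct xs)
  case Nil then show ?case by auto
next
  case (Cons x xs)
  then obtain a b where ab: "x = g a b" "P a b" by auto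
  from Cons obtain ps where "xs = map (\<lambda>(a, b). g a b) ps" "\<forall>(a, b)\<in>set ps. P a b" by auto
  then show ?case using ab by (intro exI[of _ "(a,b)#ps"]) auto
qed

lemma set_map_conv: "{bigAnd (map (\<lambda>(a, b). g a b) ps) | ps. \<forall>(a, b)\<in>set ps. P a b}
   = {bigAnd xs | xs. set xs \<subseteq> {g a b | a b. P a b}}"
proof
  show "{bigAnd (map (\<lambda>(a, b). g a b) ps) | ps. \<forall>(a, b)\<in>set ps. P a b}
   \<subseteq> {bigAnd xs | xs. set xs \<subseteq> {g a b | a b. P a b}}" by fastforce
  show "{bigAnd xs | xs. set xs \<subseteq> {g a b | a b. P a b}}
   \<subseteq> {bigAnd (map (\<lambda>(a, b). g a b) ps) | ps. \<forall>(a, b)\<in>set ps. P a b}"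
    using list_pre by blast
qed

definition GX :: "('a::complete_lattice ty set \<Rightarrow> 'a ty set) \<Rightarrow> 'a ty set" where
  "GX f = {Arr \<kappa> r | \<kappa> r. isC \<kappa> \<and> isR r \<and> r \<in> f (upc leC {\<kappa>})}"

definition KX :: "'a::complete_lattice ty set \<Rightarrow> 'a ty set \<Rightarrow> 'a ty set" where
  "KX d k = {Prod \<delta> \<kappa> | \<delta> \<kappa>. \<delta> \<in> d \<and> \<kappa> \<in> k}"

lemma Gmap_eq: "Gmap f = {t. D.der (GX f) t}"
  unfolding Gmap_def GX_def D.upc_der[symmetric]
  using set_map_conv[of Arr "\<lambda>\<kappa> r. isC \<kappa> \<and> isR r \<and> r \<in> f (upc leC {\<kappa>})"] by simp

lemma cons_eq: "cons d k = {t. C.der (KX d k) t}"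
  unfolding cons_def KX_def C.upc_der[symmetric]
  using set_map_conv[of Prod "\<lambda>\<delta> \<kappa>. \<delta> \<in> d \<and> \<kappa> \<in> k"] by simp

lemma upc1: "upc le {t} = {u. le t u}"
  unfolding upc_def by blast

lemma app_eq: "app d k = {t. \<exists>r \<kappa>. isR r \<and> Arr \<kappa> r \<in> d \<and> \<kappa> \<in> k \<and> leR r t}"
  unfolding app_def upc_def by blast

lemma principal_FC: "isC \<kappa> \<Longrightarrow> upc leC {\<kappa>} \<in> FC"
  unfolding FC_def using C.principal_filter by blast

lemma Gmap_FD: "Gmap f \<in> FD"
proof -
  have "GX f \<subseteq> Collect isD" unfolding GX_def by auto
  then show ?thesis unfolding FD_def Gmap_eq D.upc_der[symmetric] using D.upc_filter by blast
qed

lemma filt_sub: "is_filter L le S \<Longrightarrow> x \<in> S \<Longrightarrow> L x" unfolding is_filter_def by blast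
lemma filt_up: "is_filter L le S \<Longrightarrow> x \<in> S \<Longrightarrow> le x y \<Longrightarrow> y \<in> S" unfolding is_filter_def by blast
lemma filt_and: "is_filter L le S \<Longrightarrow> x \<in> S \<Longrightarrow> y \<in> S \<Longrightarrow> And x y \<in> S" unfolding is_filter_def by blast
lemma filt_om: "is_filter L le S \<Longrightarrow> Om \<in> S" unfolding is_filter_def by blast

lemma filt_D: "d \<in> FD \<Longrightarrow> is_filter isD leD d" unfolding FD_def by simp
lemma filt_C: "k \<in> FC \<Longrightarrow> is_filter isC leC k" unfolding FC_def by simp
lemma filt_R: "k \<in> FR \<Longrightarrow> is_filter isR leR k" unfolding FR_def by simp

lemma app_FR: "d \<in> FD \<Longrightarrow> k \<in> FC \<Longrightarrow> app d k \<in> FR"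
proof -
  assume d: "d \<in> FD" and k: "k \<in> FC"
  note dd = filt_D[OF d, unfolded is_filter_def] and kk = filt_C[OF k, unfolded is_filter_def]
  have 1: "app d k \<subseteq> Collect isR" unfolding app_eq using leR_dom by blast
  have "Arr Om Om \<in> d" using dd omArr by blast
  then have 2: "Om \<in> app d k" unfolding app_eq using kk by (auto intro!: exI[of _ Om] leR.reflR)
  have 3: "\<forall>s\<in>app d k. \<forall>t. leR s t \<longrightarrow> t \<in> app d k" unfolding app_eq by (blast intro: leR.transR)
  have 4: "\<forall>s\<in>app d k. \<forall>t\<in>app d k. And s t \<in> app d k"
  proof (intro ballI)
    fix s t assume "s \<in> app d k" "t \<in> app d k"
    then obtain r1 k1 r2 k2 where h: "isR r1" "Arr k1 r1 \<in> d" "k1 \<in> k" "leR r1 s"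
      "isR r2" "Arr k2 r2 \<in> d" "k2 \<in> k" "leR r2 t" unfolding app_eq by blast
    have c: "isC k1" "isC k2" using h kk by auto
    let ?K = "And k1 k2"
    have "And (Arr k1 r1) (Arr k2 r2) \<in> d" using h dd by blast
    moreover have "leD (Arr k1 r1) (Arr ?K r1)" using c h by (intro arrMono andC1 leR.reflR)
    moreover have "leD (Arr k2 r2) (Arr ?K r2)" using c h by (intro arrMono andC2 leR.reflR)
    ultimately have "And (Arr ?K r1) (Arr ?K r2) \<in> d" using dd D.And_mono by blast
    moreover have "leD (And (Arr ?K r1) (Arr ?K r2)) (Arr ?K (And r1 r2))"
      using c h by (intro arrAnd) auto
    ultimately have "Arr ?K (And r1 r2) \<in> d" using dd by blast
    moreover have "?K \<in> k" using h kk by blast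
    moreover have "leR (And r1 r2) (And s t)" using h by (intro R.And_mono)
    moreover have "isR (And r1 r2)" using h by simp
    ultimately show "And s t \<in> app d k" unfolding app_eq by blast
  qed
  show ?thesis unfolding FR_def is_filter_def using 1 2 3 4 by blast
qed

lemma Fmap_scott: "(d::'a::complete_lattice ty set) \<in> FD \<Longrightarrow> scott_cont (Fmap d)"
  unfolding scott_cont_def Fmap_def
proof (intro conjI ballI allI impI)
  fix k :: "'a ty set" assume "d \<in> FD" "k \<in> FC" then show "app d k \<in> FR" by (rule app_FR)
next
  fix k k' :: "'a ty set" assume "k \<subseteq> k'" then show "app d k \<subseteq> app d k'" unfolding app_eq by blast
next
  fix Ds :: "'a ty set set" show "app d (\<Union>Ds) = \<Union>(app d ` Ds)" unfolding app_eq by blast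
qed

lemma Gmap_Fmap: "d \<in> FD \<Longrightarrow> Gmap (Fmap d) = d"
proof
  assume d: "d \<in> FD"
  note dd = filt_D[OF d]
  have "GX (Fmap d) \<subseteq> d"
  proof
    fix x assume "x \<in> GX (Fmap d)"
    then obtain \<kappa> r where x: "x = Arr \<kappa> r" "isC \<kappa>" "isR r" "r \<in> app d (upc leC {\<kappa>})"
      unfolding GX_def Fmap_def by blast
    then obtain r' \<kappa>' where "Arr \<kappa>' r' \<in> d" "leC \<kappa> \<kappa>'" "leR r' r"
      unfolding app_eq upc1 by blast
    then show "x \<in> d" using x dd unfolding is_filter_def by (blast intro: arrMono)
  qed
  then show "Gmap (Fmap d) \<subseteq> d" unfolding Gmap_eq using D.filt_der[OF dd] by blast
next
  assume d: "d \<in> FD"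
  note dd = filt_D[OF d, unfolded is_filter_def]
  show "d \<subseteq> Gmap (Fmap d)"
  proof
    fix t assume t: "t \<in> d"
    then have tD: "isD t" using dd by blast
    let ?xs = "map (\<lambda>(k, r). Arr k r) (arl t)"
    have "set ?xs \<subseteq> GX (Fmap d)"
    proof
      fix x assume "x \<in> set ?xs"
      then obtain k r where kr: "(k, r) \<in> set (arl t)" "x = Arr k r" by auto
      then have kr2: "isC k" "isR r" "leD t (Arr k r)" using arl_D[OF tD] by fastforce+
      then have "Arr k r \<in> d" using t dd by blast
      then have "r \<in> app d (upc leC {k})" unfolding app_eq upc1 using kr2
        by (blast intro: reflC leR.reflR)
      then show "x \<in> GX (Fmap d)" unfolding GX_def Fmap_def using kr kr2 by blast
    qed
    moreover have "leD (bigAnd ?xs) t" using arl_D[OF tD] by blast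
    ultimately show "t \<in> Gmap (Fmap d)" unfolding Gmap_eq D.der_def by blast
  qed
qed

lemma scott_mono: "scott_cont f \<Longrightarrow> k \<in> FC \<Longrightarrow> k' \<in> FC \<Longrightarrow> k \<subseteq> k' \<Longrightarrow> f k \<subseteq> f k'"
  unfolding scott_cont_def by blast

lemma arl_map_Arr: "arl (bigAnd (map (\<lambda>(a, b). Arr a b) ps)) = ps"
proof (induct ps)
  case Nil then show ?case by simp
next
  case (Cons p ps)
  then show ?case by (cases p) (simp add: arl_bigAnd)
qed

lemma scott_FR: "scott_cont f \<Longrightarrow> k \<in> FC \<Longrightarrow> f k \<in> FR"
  unfolding scott_cont_def by simp

lemma scott_dir: "scott_cont f \<Longrightarrow> Ds \<subseteq> FC \<Longrightarrow> directed_set Ds \<Longrightarrow> f (\<Union>Ds) = \<Union>(f ` Ds)"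
  unfolding scott_cont_def by simp

lemma upc_sub: "leC \<kappa> \<kappa>' \<Longrightarrow> upc leC {\<kappa>'} \<subseteq> upc leC {\<kappa>}"
  unfolding upc1 by (blast intro: transC)

lemma upc_sub2: "k \<in> FC \<Longrightarrow> \<kappa> \<in> k \<Longrightarrow> upc leC {\<kappa>} \<subseteq> k"
  unfolding upc1 using filt_C unfolding is_filter_def by blast

lemma Fmap_Gmap: "scott_cont f \<Longrightarrow> k \<in> FC \<Longrightarrow> Fmap (Gmap f) k = f k"
proof
  assume f: "scott_cont f" and k: "k \<in> FC"
  note kf = filt_C[OF k]
  show "Fmap (Gmap f) k \<subseteq> f k"
  proof
    fix \<rho> assume "\<rho> \<in> Fmap (Gmap f) k"
    then obtain r \<kappa> where h: "isR r" "Arr \<kappa> r \<in> Gmap f" "\<kappa> \<in> k" "leR r \<rho>"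
      unfolding Fmap_def app_eq by blast
    have kC: "isC \<kappa>" using filt_sub[OF kf h(3)] .
    from h obtain xs where xs: "set xs \<subseteq> GX f" "leD (bigAnd xs) (Arr \<kappa> r)"
      unfolding Gmap_eq D.der_def by blast
    have "set xs \<subseteq> {Arr a b | a b. isC a \<and> isR b \<and> b \<in> f (upc leC {a})}"
      using xs(1) unfolding GX_def .
    from list_pre[OF this]
    obtain ps where ps: "xs = map (\<lambda>(a, b). Arr a b) ps"
      "\<forall>(a, b)\<in>set ps. isC a \<and> isR b \<and> b \<in> f (upc leC {a})" by blast
    have arl_ps: "arl (bigAnd xs) = ps" using ps(1) arl_map_Arr by simp
    have der: "R.der (AX (bigAnd xs) \<kappa>) r" using arr_inv(1)[OF xs(2)] by simp
    have fk: "f (upc leC {\<kappa>}) \<in> FR" using scott_FR[OF f principal_FC[OF kC]] .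
    have "AX (bigAnd xs) \<kappa> \<subseteq> f (upc leC {\<kappa>})"
    proof
      fix y assume "y \<in> AX (bigAnd xs) \<kappa>"
      then obtain a where a: "(a, y) \<in> set ps" "leC \<kappa> a"
        unfolding AX_def arl_ps by blast
      then have aa: "isC a" "y \<in> f (upc leC {a})" using ps(2) by auto
      have "f (upc leC {a}) \<subseteq> f (upc leC {\<kappa>})"
        by (rule scott_mono[OF f principal_FC[OF aa(1)] principal_FC[OF kC] upc_sub[OF a(2)]])
      then show "y \<in> f (upc leC {\<kappa>})" using aa(2) by blast
    qed
    then have "r \<in> f (upc leC {\<kappa>})" using R.filt_der[OF filt_R[OF fk]] der by blast
    then have "\<rho> \<in> f (upc leC {\<kappa>})" using filt_up[OF filt_R[OF fk]] h(4) by blast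
    moreover have "f (upc leC {\<kappa>}) \<subseteq> f k"
      using scott_mono[OF f principal_FC[OF kC] k upc_sub2[OF k h(3)]] .
    ultimately show "\<rho> \<in> f k" by blast
  qed
next
  assume f: "scott_cont f" and k: "k \<in> FC"
  note kf = filt_C[OF k]
  let ?Ds = "(\<lambda>\<kappa>. upc leC {\<kappa>}) ` k"
  have kC0: "\<And>a. a \<in> k \<Longrightarrow> isC a" using filt_sub[OF kf] .
  have kA: "\<And>a b. a \<in> k \<Longrightarrow> b \<in> k \<Longrightarrow> And a b \<in> k" using filt_and[OF kf] .
  have DsC: "?Ds \<subseteq> FC"
  proof
    fix x assume "x \<in> ?Ds"
    then obtain a where a: "a \<in> k" "x = upc leC {a}" by (rule imageE) simp
    show "x \<in> FC" unfolding a(2) by (rule principal_FC[OF kC0[OF a(1)]])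
  qed
  have dir: "directed_set ?Ds" unfolding directed_set_def
  proof (intro conjI ballI)
    have "upc leC {Om} \<in> ?Ds" using filt_om[OF kf] by (rule imageI)
    then show "?Ds \<noteq> {}" by blast
  next
    fix x y assume "x \<in> ?Ds" "y \<in> ?Ds"
    then obtain a b where ab: "a \<in> k" "b \<in> k" "x = upc leC {a}" "y = upc leC {b}" by blast
    have ab2: "And a b \<in> k" "isC a" "isC b" using kA[OF ab(1,2)] kC0[OF ab(1)] kC0[OF ab(2)] .
    have "leC (And a b) a" "leC (And a b) b" using andC1[OF ab2(2,3)] andC2[OF ab2(2,3)] .
    then have "x \<subseteq> upc leC {And a b}" "y \<subseteq> upc leC {And a b}"
      unfolding ab(3,4) using upc_sub by blast+
    moreover have "upc leC {And a b} \<in> ?Ds" using ab2(1) by (rule imageI)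
    ultimately show "\<exists>z\<in>?Ds. x \<le> z \<and> y \<le> z" by blast
  qed
  have U: "\<Union>?Ds = k"
  proof
    show "\<Union>?Ds \<subseteq> k" using upc_sub2[OF k] by blast
    show "k \<subseteq> \<Union>?Ds"
    proof
      fix a assume "a \<in> k"
      then have "leC a a" using kC0 reflC by blast
      then have "a \<in> upc leC {a}" unfolding upc1 by simp
      then show "a \<in> \<Union>?Ds" using \<open>a \<in> k\<close> by blast
    qed
  qed
  have fk: "f k = \<Union>(f ` ?Ds)" using scott_dir[OF f DsC dir] unfolding U .
  show "f k \<subseteq> Fmap (Gmap f) k"
  proof
    fix \<rho> assume "\<rho> \<in> f k"
    then obtain \<kappa> where h: "\<kappa> \<in> k" "\<rho> \<in> f (upc leC {\<kappa>})" using fk by blast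
    have kC: "isC \<kappa>" using h kC0 by blast
    have "f (upc leC {\<kappa>}) \<in> FR" using scott_FR[OF f principal_FC[OF kC]] .
    then have "f (upc leC {\<kappa>}) \<subseteq> Collect isR" using filt_R unfolding is_filter_def by blast
    then have rR: "isR \<rho>" using h by blast
    have "Arr \<kappa> \<rho> \<in> GX f" unfolding GX_def using h kC rR by blast
    then have "Arr \<kappa> \<rho> \<in> Gmap f" unfolding Gmap_eq using D.der_mem[of "Arr \<kappa> \<rho>" "GX f"] kC rR by simp
    then show "\<rho> \<in> Fmap (Gmap f) k" unfolding Fmap_def app_eq using h rR
      by (blast intro: leR.reflR)
  qed
qed

lemma Gmap_mono: "(\<And>\<kappa>. isC \<kappa> \<Longrightarrow> f1 (upc leC {\<kappa>}) \<subseteq> f2 (upc leC {\<kappa>})) \<Longrightarrow> Gmap f1 \<subseteq> Gmap f2"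
proof -
  assume h: "\<And>\<kappa>. isC \<kappa> \<Longrightarrow> f1 (upc leC {\<kappa>}) \<subseteq> f2 (upc leC {\<kappa>})"
  have "GX f1 \<subseteq> GX f2" unfolding GX_def using h by blast
  then show ?thesis unfolding Gmap_eq using D.der_mono by blast
qed

lemma Fmap_iff: "d1 \<in> FD \<Longrightarrow> d2 \<in> FD \<Longrightarrow> (d1 \<subseteq> d2 \<longleftrightarrow> (\<forall>k\<in>FC. Fmap d1 k \<subseteq> Fmap d2 k))"
proof
  assume "d1 \<subseteq> d2" then show "\<forall>k\<in>FC. Fmap d1 k \<subseteq> Fmap d2 k" unfolding Fmap_def app_eq by blast
next
  assume d: "d1 \<in> FD" "d2 \<in> FD" and h: "\<forall>k\<in>FC. Fmap d1 k \<subseteq> Fmap d2 k"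
  have "Gmap (Fmap d1) \<subseteq> Gmap (Fmap d2)" using h principal_FC by (intro Gmap_mono) blast
  then show "d1 \<subseteq> d2" using Gmap_Fmap[OF d(1)] Gmap_Fmap[OF d(2)] by simp
qed



lemma prodk_isC: "k \<in> FC \<Longrightarrow> Prod a b \<in> k \<Longrightarrow> isD a \<and> isC b"
  using filt_sub[OF filt_C] by fastforce

lemma prodk_and: "k \<in> FC \<Longrightarrow> Prod a b \<in> k \<Longrightarrow> Prod c d \<in> k \<Longrightarrow> Prod (And a c) (And b d) \<in> k"
proof -
  assume k: "k \<in> FC" and 1: "Prod a b \<in> k" and 2: "Prod c d \<in> k"
  have i: "isD a" "isC b" "isD c" "isC d" using prodk_isC[OF k 1] prodk_isC[OF k 2] by auto
  have "And (Prod a b) (Prod c d) \<in> k" using filt_and[OF filt_C[OF k] 1 2] .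
  moreover have "leC (And (Prod a b) (Prod c d)) (Prod (And a c) (And b d))"
    using prodAnd[OF i(1) i(3) i(2) i(4)] .
  ultimately show ?thesis using filt_up[OF filt_C[OF k]] by blast
qed

lemma prodk_mono: "k \<in> FC \<Longrightarrow> Prod a b \<in> k \<Longrightarrow> leD a a' \<Longrightarrow> leC b b' \<Longrightarrow> Prod a' b' \<in> k"
  using filt_up[OF filt_C] prodMono by blast

lemma Hfst: "k \<in> FC \<Longrightarrow> fst (Hmap k) \<in> FD"
proof -
  assume k: "k \<in> FC"
  let ?S = "{\<delta>. \<exists>\<kappa>. Prod \<delta> \<kappa> \<in> k}"
  have 1: "?S \<subseteq> Collect isD" using prodk_isC[OF k] by blast
  have "Prod Om Om \<in> k" using filt_up[OF filt_C[OF k] filt_om[OF filt_C[OF k]] omProd] .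
  then have 2: "Om \<in> ?S" by blast
  have 3: "\<forall>s\<in>?S. \<forall>t. leD s t \<longrightarrow> t \<in> ?S"
  proof (intro ballI allI impI)
    fix s t assume "s \<in> ?S" "leD s t"
    then obtain \<kappa> where h: "Prod s \<kappa> \<in> k" by blast
    then have "leC \<kappa> \<kappa>" using prodk_isC[OF k] reflC by blast
    then have "Prod t \<kappa> \<in> k" using prodk_mono[OF k h \<open>leD s t\<close>] by blast
    then show "t \<in> ?S" by blast
  qed
  have 4: "\<forall>s\<in>?S. \<forall>t\<in>?S. And s t \<in> ?S" using prodk_and[OF k] by blast
  show ?thesis unfolding FD_def Hmap_def is_filter_def using 1 2 3 4 by simp
qed

lemma Hsnd: "k \<in> FC \<Longrightarrow> snd (Hmap k) \<in> FC"
proof -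
  assume k: "k \<in> FC"
  let ?S = "{\<kappa>. \<exists>\<delta>. Prod \<delta> \<kappa> \<in> k}"
  have 1: "?S \<subseteq> Collect isC" using prodk_isC[OF k] by blast
  have "Prod Om Om \<in> k" using filt_up[OF filt_C[OF k] filt_om[OF filt_C[OF k]] omProd] .
  then have 2: "Om \<in> ?S" by blast
  have 3: "\<forall>s\<in>?S. \<forall>t. leC s t \<longrightarrow> t \<in> ?S"
  proof (intro ballI allI impI)
    fix s t assume "s \<in> ?S" "leC s t"
    then obtain \<delta> where h: "Prod \<delta> s \<in> k" by blast
    then have "leD \<delta> \<delta>" using prodk_isC[OF k] reflD by blast
    then have "Prod \<delta> t \<in> k" using prodk_mono[OF k h _ \<open>leC s t\<close>] by blast
    then show "t \<in> ?S" by blast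
  qed
  have 4: "\<forall>s\<in>?S. \<forall>t\<in>?S. And s t \<in> ?S" using prodk_and[OF k] by blast
  show ?thesis unfolding FC_def Hmap_def is_filter_def using 1 2 3 4 by simp
qed

lemma Kmap_FC: "d \<in> FD \<Longrightarrow> k \<in> FC \<Longrightarrow> Kmap (d, k) \<in> FC"
proof -
  assume d: "d \<in> FD" and k: "k \<in> FC"
  have "KX d k \<subseteq> Collect isC" unfolding KX_def
    using filt_sub[OF filt_D[OF d]] filt_sub[OF filt_C[OF k]] by auto
  then show ?thesis unfolding FC_def Kmap_def cons_eq C.upc_der[symmetric]
    using C.upc_filter by simp
qed

lemma KH: "k \<in> FC \<Longrightarrow> Kmap (Hmap k) = k"
proof -
  assume k: "k \<in> FC"
  note kf = filt_C[OF k]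
  have sub: "KX (fst (Hmap k)) (snd (Hmap k)) \<subseteq> k"
  proof
    fix x assume "x \<in> KX (fst (Hmap k)) (snd (Hmap k))"
    then obtain a b a2 b2 where h: "x = Prod a b" "Prod a b2 \<in> k" "Prod a2 b \<in> k"
      unfolding KX_def Hmap_def by auto
    have i: "isD a" "isC b2" "isD a2" "isC b" using prodk_isC[OF k h(2)] prodk_isC[OF k h(3)] by auto
    have "Prod (And a a2) (And b2 b) \<in> k" using prodk_and[OF k h(2,3)] .
    moreover have "leD (And a a2) a" "leC (And b2 b) b" using andD1[OF i(1,3)] andC2[OF i(2,4)] .
    ultimately show "x \<in> k" unfolding h(1) using prodk_mono[OF k] by blast
  qed
  show ?thesis
  proof
    show "Kmap (Hmap k) \<subseteq> k" unfolding Kmap_def cons_eq using C.filt_der[OF kf sub] by blast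
    show "k \<subseteq> Kmap (Hmap k)"
    proof
      fix t assume t: "t \<in> k"
      then have tC: "isC t" using filt_sub[OF kf] by blast
      let ?xs = "map (\<lambda>(d, k). Prod d k) (prl t)"
      have "set ?xs \<subseteq> KX (fst (Hmap k)) (snd (Hmap k))"
      proof
        fix x assume "x \<in> set ?xs"
        then obtain a b where ab: "(a, b) \<in> set (prl t)" "x = Prod a b" by auto
        then have "leC t (Prod a b)" using prl_C[OF tC] by fastforce
        then have "Prod a b \<in> k" using filt_up[OF kf t] by blast
        then show "x \<in> KX (fst (Hmap k)) (snd (Hmap k))" unfolding KX_def Hmap_def ab(2) by auto
      qed
      moreover have "leC (bigAnd ?xs) t" using prl_C[OF tC] by blast
      ultimately have "C.der (KX (fst (Hmap k)) (snd (Hmap k))) t" unfolding C.der_def by (intro exI[of _ ?xs] conjI)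
      then show "t \<in> Kmap (Hmap k)" unfolding Kmap_def cons_eq by simp
    qed
  qed
qed

lemma prl_KX: "set xs \<subseteq> KX d k \<Longrightarrow> fst ` set (prl (bigAnd xs)) \<subseteq> d \<and> snd ` set (prl (bigAnd xs)) \<subseteq> k"
proof -
  assume xs: "set xs \<subseteq> KX d k"
  have "\<forall>x\<in>set xs. set (prl x) \<subseteq> d \<times> k" using xs unfolding KX_def by auto
  then have "set (prl (bigAnd xs)) \<subseteq> d \<times> k" unfolding prl_bigAnd by auto
  then show ?thesis by auto
qed

lemma HK: "d \<in> FD \<Longrightarrow> k \<in> FC \<Longrightarrow> Hmap (Kmap (d, k)) = (d, k)"
proof -
  assume d: "d \<in> FD" and k: "k \<in> FC"
  note df = filt_D[OF d] and kf = filt_C[OF k]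
  have inv: "\<delta> \<in> d \<and> \<kappa> \<in> k" if h: "Prod \<delta> \<kappa> \<in> cons d k" for \<delta> \<kappa>
  proof -
    from h obtain xs where xs: "set xs \<subseteq> KX d k" "leC (bigAnd xs) (Prod \<delta> \<kappa>)"
      unfolding cons_eq C.der_def by blast
    have a: "D.der (fst ` set (prl (bigAnd xs))) \<delta> \<and> C.der (snd ` set (prl (bigAnd xs))) \<kappa>"
      using bspec[OF prod_inv[OF xs(2)], of "(\<delta>, \<kappa>)"] by simp
    have b: "fst ` set (prl (bigAnd xs)) \<subseteq> d" "snd ` set (prl (bigAnd xs)) \<subseteq> k"
      using prl_KX[OF xs(1)] by simp_all
    show ?thesis using D.filt_der[OF df b(1) conjunct1[OF a]] C.filt_der[OF kf b(2) conjunct2[OF a]] by simp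
  qed
  have 1: "\<delta> \<in> d \<Longrightarrow> Prod \<delta> Om \<in> cons d k" for \<delta>
  proof -
    assume "\<delta> \<in> d"
    moreover have "Om \<in> k" using filt_om[OF kf] .
    ultimately have "Prod \<delta> Om \<in> KX d k" "isC (Prod \<delta> Om)"
      unfolding KX_def using filt_sub[OF df] by auto
    then show ?thesis unfolding cons_eq using C.der_mem by blast
  qed
  have 2: "\<kappa> \<in> k \<Longrightarrow> Prod Om \<kappa> \<in> cons d k" for \<kappa>
  proof -
    assume "\<kappa> \<in> k"
    moreover have "Om \<in> d" using filt_om[OF df] .
    ultimately have "Prod Om \<kappa> \<in> KX d k" "isC (Prod Om \<kappa>)"
      unfolding KX_def using filt_sub[OF kf] by auto
    then show ?thesis unfolding cons_eq using C.der_mem by blast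
  qed
  show ?thesis unfolding Hmap_def Kmap_def using inv 1 2 by (auto intro!: exI)
qed

lemma H_iff: "k1 \<in> FC \<Longrightarrow> k2 \<in> FC \<Longrightarrow>
   (k1 \<subseteq> k2 \<longleftrightarrow> fst (Hmap k1) \<subseteq> fst (Hmap k2) \<and> snd (Hmap k1) \<subseteq> snd (Hmap k2))"
proof
  assume "k1 \<subseteq> k2" then show "fst (Hmap k1) \<subseteq> fst (Hmap k2) \<and> snd (Hmap k1) \<subseteq> snd (Hmap k2)"
    unfolding Hmap_def by auto
next
  assume k: "k1 \<in> FC" "k2 \<in> FC" and h: "fst (Hmap k1) \<subseteq> fst (Hmap k2) \<and> snd (Hmap k1) \<subseteq> snd (Hmap k2)"
  have "KX (fst (Hmap k1)) (snd (Hmap k1)) \<subseteq> KX (fst (Hmap k2)) (snd (Hmap k2))"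
    using h unfolding KX_def by blast
  then have "Kmap (Hmap k1) \<subseteq> Kmap (Hmap k2)" unfolding Kmap_def cons_eq using C.der_mono by blast
  then show "k1 \<subseteq> k2" using KH[OF k(1)] KH[OF k(2)] by simp
qed


theorem theorem3p27:
  assumes "omega_algebraic TYPE('a::complete_lattice)"
  shows "(\<forall>d::'a ty set. d \<in> FD \<longrightarrow> scott_cont (Fmap d))
   \<and> (\<forall>f::'a ty set \<Rightarrow> 'a ty set. scott_cont f \<longrightarrow> Gmap f \<in> FD)
   \<and> (\<forall>d::'a ty set. d \<in> FD \<longrightarrow> Gmap (Fmap d) = d)
   \<and> (\<forall>f::'a ty set \<Rightarrow> 'a ty set. scott_cont f \<longrightarrow> (\<forall>k\<in>FC. Fmap (Gmap f) k = f k))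
   \<and> (\<forall>d1::'a ty set. \<forall>d2. d1 \<in> FD \<longrightarrow> d2 \<in> FD \<longrightarrow>
        (d1 \<subseteq> d2 \<longleftrightarrow> (\<forall>k\<in>FC. Fmap d1 k \<subseteq> Fmap d2 k)))
   \<and> (\<forall>k::'a ty set. k \<in> FC \<longrightarrow> fst (Hmap k) \<in> FD \<and> snd (Hmap k) \<in> FC)
   \<and> (\<forall>d::'a ty set. \<forall>k. d \<in> FD \<longrightarrow> k \<in> FC \<longrightarrow> Kmap (d, k) \<in> FC)
   \<and> (\<forall>k::'a ty set. k \<in> FC \<longrightarrow> Kmap (Hmap k) = k)
   \<and> (\<forall>d::'a ty set. \<forall>k. d \<in> FD \<longrightarrow> k \<in> FC \<longrightarrow> Hmap (Kmap (d, k)) = (d, k))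
   \<and> (\<forall>k1::'a ty set. \<forall>k2. k1 \<in> FC \<longrightarrow> k2 \<in> FC \<longrightarrow>
        (k1 \<subseteq> k2 \<longleftrightarrow> fst (Hmap k1) \<subseteq> fst (Hmap k2) \<and> snd (Hmap k1) \<subseteq> snd (Hmap k2)))"
  apply (intro conjI allI impI ballI)
            apply (erule Fmap_scott)
           apply (rule Gmap_FD)
          apply (erule Gmap_Fmap)
         apply (erule (1) Fmap_Gmap)
        apply (erule (1) Fmap_iff)
       apply (erule Hfst)
      apply (erule Hsnd)
     apply (erule (1) Kmap_FC)
    apply (erule KH)
   apply (erule (1) HK)
  apply (erule (1) H_iff)
  done

end
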